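(* There exist infinitely many positive integers $n$ such that for each such $n$ there is a graph $G$ with exactly $\binom{2n}{2}$ edges with the property that for every bipartition $V_1,V_2$ of $V(G)$, $\max\{e(V_1),e(V_2)\}\ge \binom{n}{2}+\frac{5n}{48}$.
   Context: For a bipartition $V_1,V_2$ of $V(G)$, $e(V_i)$ denotes the number of edges of $G$ with both ends in $V_i$. *)

theory Defs
  imports Complex_Main
begin

definition simple_graph :: "'a set \<Rightarrow> 'a set set \<Rightarrow> bool" where
  "simple_graph V E \<longleftrightarrow> finite V \<and> (\<forall>e\<in>E. e \<subseteq> V \<and> card e = 2)"

definition e_in :: "'a set set \<Rightarrow> 'a set \<Rightarrow> nat" where
  "e_in E S = card {e \<in> E. e \<subseteq> S}"

end

theory Submission
  imports Defs
begin

lemma c2r: "real (x choose 2) = real x * (real x - 1) / 2"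
proof (cases x)
  case 0 then show ?thesis by simp
next
  case (Suc m)
  have "x choose 2 = x * (x - 1) div 2" by (rule choose_two)
  moreover have "even (x * (x - 1))" by auto
  ultimately have "2 * (x choose 2) = x * (x - 1)" by simp
  then have "2 * real (x choose 2) = real x * real (x - 1)"
    by (metis of_nat_mult of_nat_numeral)
  moreover have "real (x - 1) = real x - 1" using Suc by simp
  ultimately show ?thesis by simp
qed

lemma arith_half:
  fixes k n a1 a2 b1 b2 :: nat
  assumes k: "k \<ge> 2" and n: "n = 4*k^2+5*k+2" and a: "a1+a2 = 2*n-1" and b: "b1+b2 = 4*k+3"
    and a1: "a1 \<ge> n"
  shows "real (n choose 2) + 5*real n/48 \<le> real ((a1 choose 2) + (b1 choose 2)) \<or>
         real (n choose 2) + 5*real n/48 \<le> real ((a2 choose 2) + (b2 choose 2))"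
proof (cases "a1 \<ge> n + 1")
  case True
  have "real a1 * (real a1 - 1) \<ge> (real n + 1) * real n"
    using True by (intro mult_mono) auto
  moreover have "real (b1 choose 2) \<ge> 0" by simp
  ultimately have "real (n choose 2) + 5*real n/48 \<le> real ((a1 choose 2) + (b1 choose 2))"
    unfolding of_nat_add c2r by (simp add: algebra_simps divide_simps)
  then show ?thesis ..
next
  case False
  then have a1n: "a1 = n" using a1 by simp
  have npos: "n \<ge> 1" using n by simp
  then have a2n: "real a2 = real n - 1" using a a1n by linarith
  have kk: "real k * real k \<ge> 2 * real k" using k by (intro mult_right_mono) auto
  show ?thesis
  proof (cases "b1 \<ge> k + 1")
    case True
    have "real b1 * (real b1 - 1) \<ge> (real k + 1) * real k"
      using True by (intro mult_mono) auto
    moreover have "real n = 4*real k^2 + 5*real k + 2" using n by simp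
    moreover have "real k \<ge> 2" using k by simp
    ultimately have "real (n choose 2) + 5*real n/48 \<le> real ((a1 choose 2) + (b1 choose 2))"
      unfolding of_nat_add c2r a1n apply (simp add: algebra_simps power2_eq_square divide_simps) using kk by linarith
    then show ?thesis ..
  next
    case False
    then have "b2 \<ge> 3*k+3" using b by simp
    then have "real b2 * (real b2 - 1) \<ge> (3*real k + 3) * (3*real k + 2)"
      by (intro mult_mono) auto
    moreover have "real n = 4*real k^2 + 5*real k + 2" using n by simp
    moreover have "real k \<ge> 2" using k by simp
    ultimately have "real (n choose 2) + 5*real n/48 \<le> real ((a2 choose 2) + (b2 choose 2))"
      unfolding of_nat_add c2r a2n by (simp add: algebra_simps power2_eq_square divide_simps)
    then show ?thesis by simp
  qed
qed

definition P2 :: "nat set \<Rightarrow> nat set set" where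
  "P2 X = {e. e \<subseteq> X \<and> card e = 2}"

lemma card_P2: "finite X \<Longrightarrow> card (P2 X) = card X choose 2"
  unfolding P2_def by (rule n_subsets)

lemma finite_P2: "finite X \<Longrightarrow> finite (P2 X)"
  unfolding P2_def by (rule finite_subset[of _ "Pow X"]) auto

lemma P2_disj: "X \<inter> Y = {} \<Longrightarrow> P2 X \<inter> P2 Y = {}"
proof (rule ccontr)
  assume "X \<inter> Y = {}" "P2 X \<inter> P2 Y \<noteq> {}"
  then obtain e where "e \<subseteq> X" "e \<subseteq> Y" "card e = 2" unfolding P2_def by auto
  then have "e = {}" using \<open>X \<inter> Y = {}\<close> by auto
  with \<open>card e = 2\<close> show False by simp
qed

lemma card_two_P2:
  assumes "finite X" "finite Y" "X \<inter> Y = {}"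
  shows "card (P2 X \<union> P2 Y) = (card X choose 2) + (card Y choose 2)"
  using assms by (simp add: card_Un_disjoint finite_P2 P2_disj card_P2)

lemma e_in_P2:
  assumes "finite B1" "finite B2" "B1 \<inter> B2 = {}"
  shows "e_in (P2 B1 \<union> P2 B2) S = (card (B1 \<inter> S) choose 2) + (card (B2 \<inter> S) choose 2)"
proof -
  have "{e \<in> P2 B1 \<union> P2 B2. e \<subseteq> S} = P2 (B1 \<inter> S) \<union> P2 (B2 \<inter> S)"
    unfolding P2_def by auto
  moreover have "(B1 \<inter> S) \<inter> (B2 \<inter> S) = {}" using assms by auto
  ultimately show ?thesis unfolding e_in_def using assms
    by (simp add: card_two_P2)
qed

lemma good_n:
  fixes k :: nat
  assumes k: "k \<ge> 2"
  defines "n \<equiv> 4*k^2+5*k+2"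
  shows "\<exists>(V::nat set) E. simple_graph V E \<and> card E = (2 * n) choose 2 \<and>
        (\<forall>V1 V2. V1 \<union> V2 = V \<and> V1 \<inter> V2 = {} \<longrightarrow>
           real (max (e_in E V1) (e_in E V2)) \<ge> real (n choose 2) + 5 * real n / 48)"
proof -
  define N where "N = 2*n - 1"
  define c where "c = 4*k+3"
  define B1 where "B1 = {0..<N}"
  define B2 where "B2 = {N..<N+c}"
  define E where "E = P2 B1 \<union> P2 B2"
  have fin: "finite B1" "finite B2" and dis: "B1 \<inter> B2 = {}"
    unfolding B1_def B2_def by auto
  have cB: "card B1 = N" "card B2 = c" unfolding B1_def B2_def by auto
  have sg: "simple_graph (B1 \<union> B2) E"
    unfolding simple_graph_def E_def P2_def using fin by auto
  have n1: "n \<ge> 1" unfolding n_def by simp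
  have "real (card E) = real ((2*n) choose 2)"
  proof -
    have "card E = (N choose 2) + (c choose 2)"
      unfolding E_def using card_two_P2[OF fin dis] cB by simp
    then have "real (card E) = real N * (real N - 1)/2 + real c * (real c - 1)/2"
      by (simp add: c2r)
    moreover have "real N = 2*real n - 1" unfolding N_def using n1 by simp
    moreover have "real c * (real c - 1) = 2*(2*real n - 1)"
    proof -
      have "real c * (real c - 1) = (4*real k+3)*(4*real k+2)" unfolding c_def by simp
      also have "\<dots> = 2*(2*(4*real k^2+5*real k+2)-1)" by (simp add: algebra_simps power2_eq_square)
      also have "4*real k^2+5*real k+2 = real n" unfolding n_def by simp
      finally show ?thesis .
    qed
    ultimately have "real (card E) = (2*real n - 1)*(2*real n - 2)/2 + (2*real n - 1)"
      by simp
    also have "\<dots> = real (2*n) * (real (2*n) - 1) / 2" by (simp add: algebra_simps divide_simps)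
    also have "\<dots> = real ((2*n) choose 2)" by (simp only: c2r)
    finally show ?thesis .
  qed
  then have cE: "card E = (2*n) choose 2" by (simp only: of_nat_eq_iff)
  have part: "real (max (e_in E V1) (e_in E V2)) \<ge> real (n choose 2) + 5 * real n / 48"
    if "V1 \<union> V2 = B1 \<union> B2" "V1 \<inter> V2 = {}" for V1 V2
  proof -
    define a1 where "a1 = card (B1 \<inter> V1)"
    define a2 where "a2 = card (B1 \<inter> V2)"
    define b1 where "b1 = card (B2 \<inter> V1)"
    define b2 where "b2 = card (B2 \<inter> V2)"
    have "B1 = (B1 \<inter> V1) \<union> (B1 \<inter> V2)" using that by auto
    then have "card B1 = card ((B1 \<inter> V1) \<union> (B1 \<inter> V2))" by simp
    also have "\<dots> = a1 + a2" unfolding a1_def a2_def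
      by (rule card_Un_disjoint) (use fin that in auto)
    finally have "card B1 = a1 + a2" .
    then have a: "a1 + a2 = 2*n - 1" using cB N_def by simp
    have "B2 = (B2 \<inter> V1) \<union> (B2 \<inter> V2)" using that by auto
    then have "card B2 = card ((B2 \<inter> V1) \<union> (B2 \<inter> V2))" by simp
    also have "\<dots> = b1 + b2" unfolding b1_def b2_def
      by (rule card_Un_disjoint) (use fin that in auto)
    finally have "card B2 = b1 + b2" .
    then have b: "b1 + b2 = 4*k+3" using cB c_def by simp
    have e1: "e_in E V1 = (a1 choose 2) + (b1 choose 2)"
      unfolding E_def a1_def b1_def using e_in_P2[OF fin dis] by simp
    have e2: "e_in E V2 = (a2 choose 2) + (b2 choose 2)"
      unfolding E_def a2_def b2_def using e_in_P2[OF fin dis] by simp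
    have nn: "n = 4*k^2+5*k+2" unfolding n_def ..
    have "real (n choose 2) + 5*real n/48 \<le> real ((a1 choose 2) + (b1 choose 2)) \<or>
         real (n choose 2) + 5*real n/48 \<le> real ((a2 choose 2) + (b2 choose 2))"
    proof (cases "a1 \<ge> n")
      case True
      show ?thesis by (rule arith_half[OF k nn a b True])
    next
      case False
      then have "a2 \<ge> n" using a by simp
      from arith_half[OF k nn _ _ this, of a1 b2 b1] a b show ?thesis by (simp add: add.commute disj_commute)
    qed
    then show ?thesis unfolding e1 e2 by (auto simp: max_def)
  qed
  show ?thesis
    apply (rule exI[of _ "B1 \<union> B2"], rule exI[of _ E])
    using sg cE part by auto
qed

theorem theorem1p4:
  shows "infinite {n::nat. n > 0 \<and>
     (\<exists>(V::nat set) E. simple_graph V E \<and> card E = (2 * n) choose 2 \<and>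
        (\<forall>V1 V2. V1 \<union> V2 = V \<and> V1 \<inter> V2 = {} \<longrightarrow>
           real (max (e_in E V1) (e_in E V2)) \<ge> real (n choose 2) + 5 * real n / 48))}"
(is "infinite ?S")
proof
  assume "finite ?S"
  then obtain m where m: "\<forall>n\<in>?S. n \<le> m" unfolding finite_nat_set_iff_bounded_le by blast
  let ?k = "m + 2"
  let ?n = "4*?k^2+5*?k+2"
  have "?n > m" by simp
  moreover have "?n \<in> ?S"
  proof -
    have "?k \<ge> 2" by simp
    from good_n[OF this] show ?thesis unfolding mem_Collect_eq by simp
  qed
  ultimately show False using m by (meson not_le)
qed

end
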